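(* Let $C_0>0$. There exist $\delta>0$ and $C>0$ such that for every $n\in\mathbb Z\setminus\{0\}$ and every dyadic number $M\ge1$, the Lebesgue measure of the set $$\{\mu\in\mathbb R:\ M/2\le|\mu|\le2M,\ \exists\, n_1,n_2\in\mathbb Z\setminus\{0\}\text{ with } n_1+n_2=n \text{ and } |\mu+3nn_1n_2|\le C_0\langle nn_1n_2\rangle^{1/100}\}$$ is at most $CM^{1-\delta}$.
   Context: $\langle x\rangle=1+|x|$. A dyadic number is one of the form $2^j$, $j\in\mathbb Z_{\ge0}$. *)

theory Defs
  imports "HOL-Analysis.Analysis"
begin

definition jbr :: "real \<Rightarrow> real" where
  "jbr x = 1 + \<bar>x\<bar>"

definition exc_set :: "real \<Rightarrow> int \<Rightarrow> real \<Rightarrow> real set" where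
  "exc_set C0 n M = {\<mu>::real. M / 2 \<le> \<bar>\<mu>\<bar> \<and> \<bar>\<mu>\<bar> \<le> 2 * M \<and>
     (\<exists>n1 n2 :: int. n1 \<noteq> 0 \<and> n2 \<noteq> 0 \<and> n1 + n2 = n \<and>
        \<bar>\<mu> + 3 * real_of_int (n * n1 * n2)\<bar> \<le> C0 * jbr (real_of_int (n * n1 * n2)) powr (1/100))}"

end

theory Submission
  imports Defs
begin

lemma key_bound:
  fixes C0 M a :: real
  assumes C0: "C0 > 0" and M: "M \<ge> 1" and a: "a \<ge> 0"
    and h: "3 * a \<le> 2 * M + C0 * (1 + a) powr (1/100)"
  shows "a \<le> (C0^2 + 2) * M"
proof -
  have "(1 + a) powr (1/100) \<le> (1 + a) powr (1/2)"
    using a by (intro powr_mono) auto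
  also have "\<dots> = sqrt (1 + a)" using a by (simp add: powr_half_sqrt)
  finally have s1: "(1 + a) powr (1/100) \<le> sqrt (1 + a)" .
  define t where "t = sqrt (1 + a)"
  have tt: "t * t = 1 + a" unfolding t_def using a by simp
  have sq0: "0 \<le> (C0 - t) * (C0 - t)" by simp
  have sqe: "(C0 - t) * (C0 - t) = C0 * C0 - 2 * (C0 * t) + t * t"
    by (simp add: algebra_simps)
  have h0: "0 \<le> C0 * C0 - 2 * (C0 * t) + (1 + a)" using sq0 unfolding sqe tt .
  have "C0 * t \<le> (C0 * C0 + 1 + a) / 2" using h0 by (simp add: field_simps)
  hence c1: "C0 * sqrt (1 + a) \<le> (C0^2 + 1 + a) / 2" unfolding t_def by (simp add: power2_eq_square)
  have "C0 * (1 + a) powr (1/100) \<le> C0 * sqrt (1 + a)"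
    using s1 C0 by (intro mult_left_mono) auto
  hence "C0 * (1 + a) powr (1/100) \<le> (C0^2 + 1 + a) / 2" using c1 by linarith
  hence "2 * (C0 * (1 + a) powr (1/100)) \<le> C0^2 + 1 + a" by (simp add: field_simps)
  with h M zero_le_power2[of C0] have "a \<le> M + C0^2 + 1" by linarith
  moreover have "C0^2 * M \<ge> C0^2" using M by (simp add: mult_le_cancel_left1)
  ultimately show ?thesis using M by (simp add: algebra_simps)
qed

lemma min_sq:
  fixes x y :: int
  fixes A :: real
  assumes "real_of_int (\<bar>x\<bar> * \<bar>y\<bar>) \<le> A"
  shows "min \<bar>x\<bar> \<bar>y\<bar> \<le> floor (sqrt A)"
proof -
  have "(min \<bar>x\<bar> \<bar>y\<bar>)^2 \<le> \<bar>x\<bar> * \<bar>y\<bar>"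
    by (simp add: power2_eq_square min_def mult_mono)
  hence "real_of_int ((min \<bar>x\<bar> \<bar>y\<bar>)^2) \<le> A" using assms
    by (metis of_int_le_iff order_trans)
  hence "real_of_int (min \<bar>x\<bar> \<bar>y\<bar>) \<le> sqrt A" by (simp add: real_le_rsqrt)
  thus ?thesis by linarith
qed

lemma cover:
  fixes C0 M :: real and n :: int
  assumes C0: "C0 > 0" and M: "M \<ge> 1" and n: "n \<noteq> 0"
  defines "K \<equiv> C0^2 + 2"
  defines "L \<equiv> floor (sqrt (K * M))"
  defines "R \<equiv> C0 * (2 * K * M) powr (1/100)"
  shows "exc_set C0 n M \<subseteq> (\<Union>m\<in>{-L..L}.
     {-3 * real_of_int (n*m*(n-m)) - R .. -3 * real_of_int (n*m*(n-m)) + R})"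
proof
  fix \<mu> assume "\<mu> \<in> exc_set C0 n M"
  then obtain n1 n2 :: int where mu1: "\<bar>\<mu>\<bar> \<le> 2 * M" and nz: "n1 \<noteq> 0" "n2 \<noteq> 0"
     and sum: "n1 + n2 = n"
     and close: "\<bar>\<mu> + 3 * real_of_int (n * n1 * n2)\<bar> \<le> C0 * jbr (real_of_int (n * n1 * n2)) powr (1/100)"
    unfolding exc_set_def by blast
  define N where "N = n * n1 * n2"
  define a where "a = \<bar>real_of_int N\<bar>"
  have a0: "a \<ge> 0" unfolding a_def by simp
  have close': "\<bar>\<mu> + 3 * real_of_int N\<bar> \<le> C0 * (1 + a) powr (1/100)"
    using close unfolding N_def a_def jbr_def by simp
  have "3 * a \<le> 2 * M + C0 * (1 + a) powr (1/100)"
    using close' mu1 unfolding a_def by linarith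
  hence aK: "a \<le> K * M" unfolding K_def using key_bound[OF C0 M a0] by simp
  have "\<bar>n1\<bar> * \<bar>n2\<bar> \<le> \<bar>N\<bar>"
  proof -
    have "\<bar>n1\<bar> * \<bar>n2\<bar> \<le> \<bar>n\<bar> * (\<bar>n1\<bar> * \<bar>n2\<bar>)"
      using n mult_right_mono[of 1 "\<bar>n\<bar>" "\<bar>n1\<bar> * \<bar>n2\<bar>"] by simp
    thus ?thesis unfolding N_def by (simp add: abs_mult mult.assoc)
  qed
  hence "real_of_int (\<bar>n1\<bar> * \<bar>n2\<bar>) \<le> K * M" using aK unfolding a_def
    by (metis of_int_abs of_int_le_iff order_trans)
  hence minL: "min \<bar>n1\<bar> \<bar>n2\<bar> \<le> L" unfolding L_def by (rule min_sq)
  have K2: "K \<ge> 2" unfolding K_def by simp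
  have KM: "K * M \<ge> 2" using mult_mono[of 2 K 1 M] K2 M by simp
  have "(1 + a) powr (1/100) \<le> (2 * K * M) powr (1/100)"
    using aK KM a0 by (intro powr_mono2) auto
  hence "C0 * (1 + a) powr (1/100) \<le> C0 * (2 * K * M) powr (1/100)"
    using C0 by (intro mult_left_mono) auto
  hence rad: "\<bar>\<mu> + 3 * real_of_int N\<bar> \<le> R" using close' unfolding R_def by linarith
  obtain m where m: "\<bar>m\<bar> \<le> L" "n * m * (n - m) = N"
  proof (cases "\<bar>n1\<bar> \<le> \<bar>n2\<bar>")
    case True
    show ?thesis by (rule that[of n1]) (use True minL sum in \<open>auto simp: N_def\<close>)
  next
    case False
    show ?thesis by (rule that[of n2]) (use False minL sum in \<open>auto simp: N_def\<close>)
  qed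
  show "\<mu> \<in> (\<Union>m\<in>{-L..L}.
     {-3 * real_of_int (n*m*(n-m)) - R .. -3 * real_of_int (n*m*(n-m)) + R})"
    using m rad by (intro UN_I[of m]) auto
qed

theorem lemmaA1:
  fixes C0 :: real
  assumes "C0 > 0"
  shows "\<exists>\<delta>>0. \<exists>C>0. \<forall>n::int. \<forall>j::nat. n \<noteq> 0 \<longrightarrow>
           emeasure lebesgue (exc_set C0 n (2 ^ j)) \<le> ennreal (C * (2 ^ j) powr (1 - \<delta>))"
proof -
  define K where "K = C0^2 + 2"
  have K2: "K \<ge> 2" unfolding K_def by simp
  have "\<forall>n::int. \<forall>j::nat. n \<noteq> 0 \<longrightarrow>
           emeasure lebesgue (exc_set C0 n (2 ^ j)) \<le> ennreal ((12 * C0 * K^2) * (2 ^ j) powr (1 - 49/100))"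
  proof (intro allI impI)
    fix n :: int and j :: nat
    assume n: "n \<noteq> 0"
    define M :: real where "M = 2 ^ j"
    have M: "M \<ge> 1" unfolding M_def by simp
    define L where "L = floor (sqrt (K * M))"
    define R where "R = C0 * (2 * K * M) powr (1/100)"
    define c where "c m = -3 * real_of_int (n*m*(n-m))" for m
    have R0: "R \<ge> 0" unfolding R_def using assms by simp
    have sub: "exc_set C0 n M \<subseteq> (\<Union>m\<in>{-L..L}. {c m - R .. c m + R})"
      using cover[OF assms M n] unfolding c_def L_def R_def K_def by simp
    have "emeasure lebesgue (exc_set C0 n M) \<le> emeasure lebesgue (\<Union>m\<in>{-L..L}. {c m - R .. c m + R})"
      by (rule emeasure_mono[OF sub]) auto
    also have "\<dots> \<le> (\<Sum>m\<in>{-L..L}. emeasure lebesgue {c m - R .. c m + R})"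
      by (rule emeasure_subadditive_finite) auto
    also have "\<dots> = (\<Sum>m\<in>{-L..L}. ennreal (2 * R))"
      using R0 by (intro sum.cong) auto
    also have "\<dots> = ennreal (\<Sum>m\<in>{-L..L}. 2 * R)"
      using R0 by (intro sum_ennreal) auto
    also have "\<dots> = ennreal ((2 * real_of_int L + 1) * (2 * R))"
    proof -
      have "0 \<le> K * M" using mult_nonneg_nonneg[of K M] K2 M by linarith
      hence L0: "L \<ge> 0" unfolding L_def by simp
      have "card {-L..L} = nat (2 * L + 1)" by simp
      thus ?thesis using L0 by simp
    qed
    also have "\<dots> \<le> ennreal ((12 * C0 * K^2) * M powr (1 - 49/100))"
    proof (rule ennreal_leI)
      have s1: "1 \<le> sqrt K" using K2 by simp
      have "sqrt K * 1 \<le> sqrt K * sqrt K" using s1 by (intro mult_left_mono) auto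
      hence sK: "sqrt K \<le> K" using K2 by simp
      have sM: "sqrt M \<ge> 1" using M by simp
      have "real_of_int L \<le> sqrt K * sqrt M" unfolding L_def
        using real_sqrt_mult[of K M] mult_nonneg_nonneg[of K M] K2 M by linarith
      hence "2 * real_of_int L + 1 \<le> 3 * K * sqrt M"
      proof -
        have "sqrt K * sqrt M \<le> K * sqrt M" using sK sM by (intro mult_right_mono) auto
        moreover have "1 * 1 \<le> K * sqrt M" using sM K2 by (intro mult_mono) auto
        ultimately show ?thesis using \<open>real_of_int L \<le> sqrt K * sqrt M\<close> by linarith
      qed
      moreover have "R \<le> C0 * (2 * K) * M powr (1/100)"
      proof -
        have "(2 * K * M) powr (1/100) = (2 * K) powr (1/100) * M powr (1/100)"
          using K2 M by (simp add: powr_mult)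
        moreover have "(2 * K) powr (1/100) \<le> 2 * K"
          using K2 powr_mono[of "1/100" 1 "2*K"] by simp
        hence "(2 * K) powr (1/100) * M powr (1/100) \<le> (2 * K) * M powr (1/100)"
          by (intro mult_right_mono) auto
        ultimately have "(2 * K * M) powr (1/100) \<le> (2 * K) * M powr (1/100)" by simp
        hence "C0 * (2 * K * M) powr (1/100) \<le> C0 * ((2 * K) * M powr (1/100))"
          using assms by (intro mult_left_mono) auto
        thus ?thesis unfolding R_def by (simp add: mult.assoc)
      qed
      ultimately have "(2 * real_of_int L + 1) * (2 * R) \<le> (3 * K * sqrt M) * (2 * (C0 * (2 * K) * M powr (1/100)))"
        using R0 sM K2 by (intro mult_mono) auto
      also have "\<dots> = (12 * C0 * K^2) * (M powr (1/2) * M powr (1/100))"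
        using M by (simp add: powr_half_sqrt power2_eq_square)
      also have "\<dots> = (12 * C0 * K^2) * M powr (1 - 49/100)"
        using M by (simp add: powr_add[symmetric])
      finally show "(2 * real_of_int L + 1) * (2 * R) \<le> (12 * C0 * K^2) * M powr (1 - 49/100)" .
    qed
    finally show "emeasure lebesgue (exc_set C0 n (2 ^ j)) \<le> ennreal ((12 * C0 * K^2) * (2 ^ j) powr (1 - 49/100))"
      unfolding M_def by simp
  qed
  moreover have "12 * C0 * K^2 > 0" using assms K2 by simp
  moreover have "(49/100::real) > 0" by simp
  ultimately show ?thesis by blast
qed

end
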